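(* Let $m$ be a real number such that $\frac m2\notin\{0,-1,-2,\dots\}$ and let $d(z,n)=\frac{z^n}{\frac m2(\frac m2+1)\cdots(\frac m2+n-1)}=\frac{z^n\Gamma(\frac m2)}{\Gamma(\frac m2+n)}$ for $z\ge0$, $n\in\mathbb N$ (with $d(z,0)=1$). Then $\mathcal K^\alpha\rightarrow^dK^\alpha$ for each $\alpha\in\{+,-,0\}$. As a consequence, every element of the algebra generated by $\mathcal K^+,\mathcal K^-,\mathcal K^0$ is dual, with duality function $d$, to the element of the algebra generated by $K^+,K^-,K^0$ obtained by replacing each operator $\mathcal K^\alpha$ by $K^\alpha$ and reversing the order of products.
   Context: $\mathbb N=\{0,1,2,\dots\}$. On smooth functions $f:[0,\infty)\to\mathbb R$: $\mathcal K^+f(z)=zf(z)$, $\mathcal K^-f(z)=zf''(z)+\frac m2f'(z)$, $\mathcal K^0f(z)=zf'(z)+\frac m4f(z)$. On functions $f:\mathbb N\to\mathbb R$: $K^+f(n)=(\frac m2+n)f(n+1)$, $K^-f(n)=nf(n-1)$, $K^0f(n)=(\frac m4+n)f(n)$. Left/right actions: $(\mathcal K_ld)(z,n)=(\mathcal Kd(\cdot,n))(z)$, $(K_rd)(z,n)=(Kd(z,\cdot))(n)$; $\mathcal K\rightarrow^dK$ means $\mathcal K_ld=K_rd$. *)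

theory Defs
  imports "HOL-Analysis.Analysis"
begin

datatype gen = KPlus | KMinus | KZero

text \<open>Continuous-variable operators acting on functions of z (the functions we
apply them to are polynomials in z, so the ordinary derivative is used).\<close>
fun calK :: "real \<Rightarrow> gen \<Rightarrow> (real \<Rightarrow> real) \<Rightarrow> real \<Rightarrow> real" where
  "calK m KPlus f z = z * f z"
| "calK m KMinus f z = z * deriv (deriv f) z + m / 2 * deriv f z"
| "calK m KZero f z = z * deriv f z + m / 4 * f z"

fun Kd :: "real \<Rightarrow> gen \<Rightarrow> (nat \<Rightarrow> real) \<Rightarrow> nat \<Rightarrow> real" where
  "Kd m KPlus f n = (m / 2 + real n) * f (n + 1)"
| "Kd m KMinus f n = real n * f (n - 1)"
| "Kd m KZero f n = (m / 4 + real n) * f n"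

definition left_act :: "real \<Rightarrow> gen \<Rightarrow> (real \<Rightarrow> nat \<Rightarrow> real) \<Rightarrow> real \<Rightarrow> nat \<Rightarrow> real" where
  "left_act m a D = (\<lambda>z n. calK m a (\<lambda>y. D y n) z)"

definition right_act :: "real \<Rightarrow> gen \<Rightarrow> (real \<Rightarrow> nat \<Rightarrow> real) \<Rightarrow> real \<Rightarrow> nat \<Rightarrow> real" where
  "right_act m a D = (\<lambda>z n. Kd m a (D z) n)"

text \<open>A word [a1,...,ak] denotes the product K^{a1} ... K^{ak}, acting as
K^{a1}(K^{a2}(...(K^{ak} D))).\<close>
definition left_word :: "real \<Rightarrow> gen list \<Rightarrow> (real \<Rightarrow> nat \<Rightarrow> real) \<Rightarrow> real \<Rightarrow> nat \<Rightarrow> real" where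
  "left_word m w D = foldr (left_act m) w D"

definition right_word :: "real \<Rightarrow> gen list \<Rightarrow> (real \<Rightarrow> nat \<Rightarrow> real) \<Rightarrow> real \<Rightarrow> nat \<Rightarrow> real" where
  "right_word m w D = foldr (right_act m) w D"

text \<open>An element of the generated algebra: a finite real linear combination of words.\<close>
type_synonym alg_elem = "(real \<times> gen list) list"

definition left_elem :: "real \<Rightarrow> alg_elem \<Rightarrow> (real \<Rightarrow> nat \<Rightarrow> real) \<Rightarrow> real \<Rightarrow> nat \<Rightarrow> real" where
  "left_elem m A D = (\<lambda>z n. (\<Sum>(c, w)\<leftarrow>A. c * left_word m w D z n))"

definition right_elem :: "real \<Rightarrow> alg_elem \<Rightarrow> (real \<Rightarrow> nat \<Rightarrow> real) \<Rightarrow> real \<Rightarrow> nat \<Rightarrow> real" where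
  "right_elem m A D = (\<lambda>z n. (\<Sum>(c, w)\<leftarrow>A. c * right_word m w D z n))"

definition rev_elem :: "alg_elem \<Rightarrow> alg_elem" where
  "rev_elem A = map (\<lambda>(c, w). (c, rev w)) A"

definition dfun :: "real \<Rightarrow> real \<Rightarrow> nat \<Rightarrow> real" where
  "dfun m z n = z ^ n / pochhammer (m / 2) n"

end

theory Submission
  imports Defs "HOL-Computational_Algebra.Polynomial"
begin

lemma deriv_poly: "deriv (poly p) = poly (pderiv (p::real poly))"
  by (rule ext, rule DERIV_imp_deriv, rule poly_DERIV)

fun qa :: "real \<Rightarrow> gen \<Rightarrow> real poly \<Rightarrow> real poly" where
  "qa m KPlus p = [:0,1:] * p"
| "qa m KMinus p = [:0,1:] * pderiv (pderiv p) + smult (m/2) (pderiv p)"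
| "qa m KZero p = [:0,1:] * pderiv p + smult (m/4) p"

lemma calK_poly: "calK m a (poly p) = poly (qa m a p)"
  by (cases a) (auto simp: deriv_poly fun_eq_iff)

lemma qa_smult: "qa m a (smult c p) = smult c (qa m a p)"
  by (cases a) (auto simp: pderiv_smult smult_add_right smult_smult mult.commute)

definition PP :: "(real \<Rightarrow> nat \<Rightarrow> real) \<Rightarrow> bool" where
  "PP D = (\<forall>n. \<exists>p. (\<lambda>y. D y n) = poly p)"

lemma PP_left: "PP D \<Longrightarrow> PP (left_act m a D)"
  unfolding PP_def left_act_def
proof
  fix n assume "\<forall>n. \<exists>p. (\<lambda>y. D y n) = poly p"
  then obtain p where p: "(\<lambda>y. D y n) = poly p" by blast
  show "\<exists>q. (\<lambda>y. calK m a (\<lambda>y. D y n) y) = poly q"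
    by (rule exI[of _ "qa m a p"]) (simp add: p calK_poly)
qed

lemma PP_right: "PP D \<Longrightarrow> PP (right_act m b D)"
  unfolding PP_def right_act_def
proof
  fix n assume H: "\<forall>n. \<exists>p. (\<lambda>y. D y n) = poly p"
  show "\<exists>q. (\<lambda>y. Kd m b (D y) n) = poly q"
  proof (cases b)
    case KPlus
    from H obtain p where p: "(\<lambda>y. D y (n+1)) = poly p" by blast
    show ?thesis using KPlus
      by (intro exI[of _ "smult (m/2 + real n) p"]) (simp add: fun_eq_iff p[unfolded fun_eq_iff, rule_format, symmetric])
  next
    case KMinus
    from H obtain p where p: "(\<lambda>y. D y (n-1)) = poly p" by blast
    show ?thesis using KMinus
      by (intro exI[of _ "smult (real n) p"]) (simp add: fun_eq_iff p[unfolded fun_eq_iff, rule_format, symmetric])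
  next
    case KZero
    from H obtain p where p: "(\<lambda>y. D y n) = poly p" by blast
    show ?thesis using KZero
      by (intro exI[of _ "smult (m/4 + real n) p"]) (simp add: fun_eq_iff p[unfolded fun_eq_iff, rule_format, symmetric])
  qed
qed

lemma calK_scaled:
  assumes "f = poly p"
  shows "calK m a (\<lambda>y. c * f y) z = c * calK m a f z"
proof -
  have "(\<lambda>y. c * f y) = poly (smult c p)" using assms by (simp add: fun_eq_iff)
  then show ?thesis using assms by (simp add: calK_poly qa_smult)
qed

lemma commute: "PP D \<Longrightarrow> left_act m a (right_act m b D) = right_act m b (left_act m a D)"
proof -
  assume H: "PP D"
  show ?thesis
  proof (rule ext, rule ext)
    fix z n
    show "left_act m a (right_act m b D) z n = right_act m b (left_act m a D) z n"
    proof (cases b)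
      case KPlus
      from H obtain p where p: "(\<lambda>y. D y (n+1)) = poly p" unfolding PP_def by blast
      show ?thesis using KPlus calK_scaled[of "\<lambda>y. D y (n+1)" p, OF p]
        by (simp add: left_act_def right_act_def)
    next
      case KMinus
      from H obtain p where p: "(\<lambda>y. D y (n-1)) = poly p" unfolding PP_def by blast
      show ?thesis using KMinus calK_scaled[of "\<lambda>y. D y (n-1)" p, OF p]
        by (simp add: left_act_def right_act_def)
    next
      case KZero
      from H obtain p where p: "(\<lambda>y. D y n) = poly p" unfolding PP_def by blast
      show ?thesis using KZero calK_scaled[of "\<lambda>y. D y (n)" p, OF p]
        by (simp add: left_act_def right_act_def)
    qed
  qed
qed

lemma PP_dfun: "PP (dfun m)"
  unfolding PP_def dfun_def
proof
  fix n
  show "\<exists>p. (\<lambda>y. y ^ n / pochhammer (m / 2) n) = poly p"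
    by (rule exI[of _ "smult (1/pochhammer (m/2) n) (monom 1 n)"]) (simp add: fun_eq_iff poly_monom)
qed

lemma PP_right_word: "PP D \<Longrightarrow> PP (foldr (right_act m) v D)"
  by (induction v) (auto intro: PP_right)

lemma commute_word: "PP D \<Longrightarrow> left_act m a (foldr (right_act m) v D) = foldr (right_act m) v (left_act m a D)"
proof (induction v)
  case Nil then show ?case by simp
next
  case (Cons b v)
  have "left_act m a (foldr (right_act m) (b#v) D) = left_act m a (right_act m b (foldr (right_act m) v D))" by simp
  also have "\<dots> = right_act m b (left_act m a (foldr (right_act m) v D))"
    by (rule commute[OF PP_right_word[OF Cons.prems]])
  also have "\<dots> = foldr (right_act m) (b#v) (left_act m a D)" using Cons by simp
  finally show ?case .
qed

lemma pos_poch: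
  assumes "\<forall>k::nat. m / 2 \<noteq> - real k"
  shows "pochhammer (m/2) n \<noteq> (0::real)"
  using assms by (auto simp: pochhammer_eq_0_iff)

lemma single:
  assumes "\<forall>k::nat. m / 2 \<noteq> - real k"
  shows "left_act m a (dfun m) = right_act m a (dfun m)"
proof (rule ext, rule ext)
  fix z n
  define P where "P k = pochhammer (m/2) k" for k
  have P0: "P k \<noteq> 0" for k unfolding P_def using pos_poch[OF assms] .
  have Ps: "P (Suc k) = (m/2 + real k) * P k" for k unfolding P_def by (simp add: pochhammer_rec' algebra_simps)
  have d1: "deriv (\<lambda>y. y ^ k / P k) = (\<lambda>y. real k * y ^ (k - 1) / P k)" for k
    by (rule ext, rule DERIV_imp_deriv) (auto intro!: derivative_eq_intros simp: P0)
  have d2: "deriv (\<lambda>y. real k * y ^ (k - Suc 0) / P k) = (\<lambda>y. real k * (real (k - 1) * y ^ (k - 1 - 1)) / P k)" for k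
    by (rule ext, rule DERIV_imp_deriv) (auto intro!: derivative_eq_intros simp: P0)
  have nz: "m/2 + real k \<noteq> 0" for k using P0[of "Suc k"] Ps[of k] by auto
  show "left_act m a (dfun m) z n = right_act m a (dfun m) z n"
  proof (cases a)
    case KPlus
    have "(m/2 + real n) * (z ^ Suc n / ((m/2 + real n) * P n)) = z * (z ^ n / P n)"
      using nz[of n] by simp
    then show ?thesis using KPlus by (simp add: left_act_def right_act_def dfun_def P_def[symmetric] Ps)
  next
    case KZero
    have "z * (real n * z ^ (n - 1)) = real n * z ^ n"
      by (cases n) auto
    then show ?thesis using KZero P0[of n] by (simp add: left_act_def right_act_def dfun_def P_def[symmetric] d1 field_simps)
  next
    case KMinus
    show ?thesis
    proof (cases n)
      case 0
      then show ?thesis using KMinus by (simp add: left_act_def right_act_def dfun_def P_def[symmetric] d1 d2)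
    next
      case (Suc k)
      have L: "left_act m a (dfun m) z n = z*(real n*(real (n-1)*z^(n-1-1))/P n) + m/2*(real n*z^(n-1)/P n)"
        using KMinus by (simp add: left_act_def dfun_def P_def[symmetric] d1 d2)
      have R: "right_act m a (dfun m) z n = real n * (z^(n-1) / P (n-1))"
        using KMinus by (simp add: right_act_def dfun_def P_def[symmetric])
      have e: "z * (real k * z ^ (k - 1)) = real k * z ^ k"
        by (cases k) auto
      have "z*(real (Suc k)*(real k*z^(k-1))/((m/2 + real k) * P k)) + m/2*(real (Suc k)*z^k/((m/2 + real k) * P k))
          = real (Suc k) * ((z*(real k*z^(k-1)) + m/2*z^k)/((m/2 + real k) * P k))"
        by (simp add: add_divide_distrib algebra_simps)
      also have "z*(real k*z^(k-1)) + m/2*z^k = (m/2+real k)*z^k"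
        using e by (simp add: algebra_simps)
      also have "real (Suc k) * (((m/2+real k)*z^k)/((m/2 + real k) * P k)) = real (Suc k) * (z^k / P k)"
        using nz[of k] by simp
      finally show ?thesis using L R Suc by (simp add: Ps)
    qed
  qed
qed

lemma word:
  assumes "\<forall>k::nat. m / 2 \<noteq> - real k"
  shows "left_word m w (dfun m) = right_word m (rev w) (dfun m)"
proof (induction w)
  case Nil then show ?case by (simp add: left_word_def right_word_def)
next
  case (Cons a w)
  have "left_word m (a#w) (dfun m) = left_act m a (foldr (right_act m) (rev w) (dfun m))"
    using Cons by (simp add: left_word_def right_word_def)
  also have "\<dots> = foldr (right_act m) (rev w) (right_act m a (dfun m))"
    by (simp add: commute_word[OF PP_dfun] single[OF assms])
  finally show ?case by (simp add: right_word_def)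
qed

theorem proposition5p2:
  fixes m :: real
  assumes "\<forall>k::nat. m / 2 \<noteq> - real k"
  shows "(\<forall>a z n. z \<ge> 0 \<longrightarrow> left_act m a (dfun m) z n = right_act m a (dfun m) z n)
       \<and> (\<forall>A z n. z \<ge> 0 \<longrightarrow> left_elem m A (dfun m) z n = right_elem m (rev_elem A) (dfun m) z n)"
  using single[OF assms] word[OF assms]
  by (simp add: left_elem_def right_elem_def rev_elem_def case_prod_unfold o_def)

end
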